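(* Let $\mathcal{M}=\langle S,\iota,\mathsf{Act},P,\mathsf{Z},\mathsf{obs}\rangle$ be an MDP. For every trace $\tau\in\mathsf{Z}^+$, the set $V(\mathsf{est}_{\mathsf{MDP}}(\tau))$ is finite.
   Context: An MDP is a tuple $\langle S,\iota,\mathsf{Act},P,\mathsf{Z},\mathsf{obs}\rangle$: finite state set $S$, initial distribution $\iota\in\mathsf{Distr}(S)$, finite action set $\mathsf{Act}$, partial transition function $P\colon S\times\mathsf{Act}\rightharpoonup\mathsf{Distr}(S)$ (write $P(s,\alpha,s')=P(s,\alpha)(s')$), finite observation set $\mathsf{Z}$, observation function $\mathsf{obs}\colon S\to\mathsf{Distr}(\mathsf{Z})$; $\mathsf{AvAct}(s)=\{\alpha\mid P(s,\alpha)\text{ defined}\}\neq\emptyset$. Beliefs: $\mathsf{Bel}=\mathsf{Distr}(S)\cup\{\mathbf{0}\}$, viewed as vectors in $\mathbb{R}^S$. $\mathsf{est}_{\mathsf{MDP}}\colon\mathsf{Z}^+\to2^{\mathsf{Bel}}$: $\mathsf{est}_{\mathsf{MDP}}(z)=\{b_z\}$ with $b_z(s)=\iota(s)\mathsf{obs}(s)(z)/\sum_{\hat s}\iota(\hat s)\mathsf{obs}(\hat s)(z)$ (or $\mathbf{0}$ if the denominator is $0$), and $\mathsf{est}_{\mathsf{MDP}}(\tau\cdot z)=\bigcup_{\mathsf{bel}\in\mathsf{est}_{\mathsf{MDP}}(\tau)}\mathsf{est}^{\mathsf{up}}(\mathsf{bel},z)$, where $\mathsf{bel}'\in\mathsf{est}^{\mathsf{up}}(\mathsf{bel},z)$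 iff there is $\varsigma\colon S\to\mathsf{Distr}(\mathsf{Act})$ with $\varsigma(s)$ supported in $\mathsf{AvAct}(s)$ and $\mathsf{bel}'(s')=\dfrac{\sum_s\mathsf{bel}(s)\sum_\alpha\varsigma(s)(\alpha)P(s,\alpha,s')\mathsf{obs}(s')(z)}{\sum_s\mathsf{bel}(s)\sum_\alpha\varsigma(s)(\alpha)\sum_{\hat s}P(s,\alpha,\hat s)\mathsf{obs}(\hat s)(z)}$ for all $s'$ ($0/0=0$). For $B\subseteq\mathsf{Bel}$, $V(B)$ is the set of elements of $B$ that are not convex combinations of other elements of $B$ (vertices of the convex hull of $B$). *)

theory Defs
  imports "HOL-Analysis.Analysis" "HOL-Probability.Probability_Mass_Function"
begin

text \<open>An MDP with finite state type 's, finite action type 'a and finite observation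
  type 'z is given by an initial distribution iota :: 's pmf, a partial transition
  function P :: 's => 'a => 's pmf option (None = undefined) and an observation
  function obs :: 's => 'z pmf.\<close>

definition AvAct :: "('s \<Rightarrow> 'a \<Rightarrow> 's pmf option) \<Rightarrow> 's \<Rightarrow> 'a set" where
  "AvAct P s = {\<alpha>. P s \<alpha> \<noteq> None}"

definition Ptr :: "('s \<Rightarrow> 'a \<Rightarrow> 's pmf option) \<Rightarrow> 's \<Rightarrow> 'a \<Rightarrow> 's \<Rightarrow> real" where
  "Ptr P s \<alpha> s' = (case P s \<alpha> of None \<Rightarrow> 0 | Some d \<Rightarrow> pmf d s')"

definition est_init :: "'s::finite pmf \<Rightarrow> ('s \<Rightarrow> 'z pmf) \<Rightarrow> 'z \<Rightarrow> real ^ 's" where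
  "est_init \<iota> obs z =
     (let d = (\<Sum>s\<in>UNIV. pmf \<iota> s * pmf (obs s) z)
      in if d = 0 then 0 else (\<chi> s. pmf \<iota> s * pmf (obs s) z / d))"

definition est_up :: "('s::finite \<Rightarrow> 'a::finite \<Rightarrow> 's pmf option) \<Rightarrow> ('s \<Rightarrow> 'z pmf)
    \<Rightarrow> real ^ 's \<Rightarrow> 'z \<Rightarrow> (real ^ 's) set" where
  "est_up P obs bel z =
     {bel'. \<exists>\<sigma> :: 's \<Rightarrow> 'a pmf. (\<forall>s. set_pmf (\<sigma> s) \<subseteq> AvAct P s) \<and>
        bel' = (\<chi> s'.
          (\<Sum>s\<in>UNIV. bel $ s * (\<Sum>\<alpha>\<in>UNIV. pmf (\<sigma> s) \<alpha> * Ptr P s \<alpha> s' * pmf (obs s') z))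
          / (\<Sum>s\<in>UNIV. bel $ s * (\<Sum>\<alpha>\<in>UNIV. pmf (\<sigma> s) \<alpha> *
                (\<Sum>t\<in>UNIV. Ptr P s \<alpha> t * pmf (obs t) z))))}"

text \<open>est_MDP on nonempty traces z0 z1 ... zn (the first observation is the initial one);
  division by zero yields 0 in Isabelle, matching the convention 0/0 = 0.\<close>
fun est_MDP :: "'s::finite pmf \<Rightarrow> ('s \<Rightarrow> 'a::finite \<Rightarrow> 's pmf option) \<Rightarrow> ('s \<Rightarrow> 'z pmf)
    \<Rightarrow> 'z list \<Rightarrow> (real ^ 's) set" where
  "est_MDP \<iota> P obs [] = {}"
| "est_MDP \<iota> P obs (z # zs) =
     foldl (\<lambda>B z. \<Union>bel\<in>B. est_up P obs bel z) {est_init \<iota> obs z} zs"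

definition V :: "('v::real_vector) set \<Rightarrow> 'v set" where
  "V B = {b \<in> B. b \<notin> convex hull (B - {b})}"

end

theory Submission
  imports Defs "HOL-Library.FuncSet"
begin

lemma prod_sum_single:
  fixes p :: "'s::finite \<Rightarrow> 'a::finite \<Rightarrow> real"
  assumes "\<And>s. (\<Sum>\<alpha>\<in>UNIV. p s \<alpha>) = 1"
  shows "(\<Sum>d\<in>UNIV. (\<Prod>s\<in>UNIV. p s (d s)) * g (d st)) = (\<Sum>\<alpha>\<in>UNIV. p st \<alpha> * g \<alpha>)"
proof -
  define f where "f x y = (if x = st then p x y * g y else p x y)" for x y
  have "(\<Prod>x\<in>UNIV. \<Sum>y\<in>UNIV. f x y) = (\<Sum>d\<in>PiE UNIV (\<lambda>_. UNIV). \<Prod>x\<in>UNIV. f x (d x))"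
    by (rule prod_sum_PiE) auto
  moreover have "PiE UNIV (\<lambda>_. UNIV) = (UNIV :: ('s \<Rightarrow> 'a) set)" by auto
  moreover have "(\<Prod>x\<in>UNIV. \<Sum>y\<in>UNIV. f x y) = (\<Sum>y\<in>UNIV. f st y) * (\<Prod>x\<in>UNIV-{st}. \<Sum>y\<in>UNIV. f x y)"
    by (simp add: prod.remove)
  moreover have "(\<Prod>x\<in>UNIV-{st}. \<Sum>y\<in>UNIV. f x y) = 1"
    by (rule prod.neutral) (auto simp: f_def assms)
  moreover have "\<And>d. (\<Prod>x\<in>UNIV. f x (d x)) = (\<Prod>s\<in>UNIV. p s (d s)) * g (d st)"
  proof -
    fix d :: "'s \<Rightarrow> 'a"
    have "(\<Prod>x\<in>UNIV. f x (d x)) = f st (d st) * (\<Prod>x\<in>UNIV-{st}. f x (d x))"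
      by (simp add: prod.remove)
    also have "(\<Prod>x\<in>UNIV-{st}. f x (d x)) = (\<Prod>x\<in>UNIV-{st}. p x (d x))"
      by (rule prod.cong) (auto simp: f_def)
    also have "(\<Prod>s\<in>UNIV. p s (d s)) = p st (d st) * (\<Prod>x\<in>UNIV-{st}. p x (d x))"
      by (simp add: prod.remove)
    ultimately show "(\<Prod>x\<in>UNIV. f x (d x)) = (\<Prod>s\<in>UNIV. p s (d s)) * g (d st)"
      by (simp add: f_def)
  qed
  ultimately show ?thesis by (simp add: f_def)
qed

definition vv :: "('s \<Rightarrow> 'a \<Rightarrow> 's pmf option) \<Rightarrow> ('s \<Rightarrow> 'z pmf) \<Rightarrow> 'z \<Rightarrow> 's \<Rightarrow> 'a \<Rightarrow> 's \<Rightarrow> real" where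
  "vv P obs z s \<alpha> s' = Ptr P s \<alpha> s' * pmf (obs s') z"

definition UU :: "('s::finite \<Rightarrow> 'a::finite \<Rightarrow> 's pmf option) \<Rightarrow> ('s \<Rightarrow> 'z pmf) \<Rightarrow> 'z \<Rightarrow> ('s \<Rightarrow> 'a \<Rightarrow> real) \<Rightarrow> real^'s \<Rightarrow> real^'s" where
  "UU P obs z \<omega> bel = (\<chi> s'. \<Sum>s\<in>UNIV. bel $ s * (\<Sum>\<alpha>\<in>UNIV. \<omega> s \<alpha> * vv P obs z s \<alpha> s'))"

definition tot :: "real^'s::finite \<Rightarrow> real" where
  "tot x = (\<Sum>s\<in>UNIV. x $ s)"

definition NN where
  "NN P obs z \<omega> bel = inverse (tot (UU P obs z \<omega> bel)) *\<^sub>R UU P obs z \<omega> bel"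

lemma tot_sum: "tot (\<Sum>i\<in>I. x i) = (\<Sum>i\<in>I. tot (x i))"
  unfolding tot_def sum_component by (rule sum.swap)

lemma tot_scale: "tot (c *\<^sub>R x) = c * tot x"
  unfolding tot_def by (simp add: sum_distrib_left)

lemma est_up_eq: "est_up P obs bel z =
  {NN P obs z (\<lambda>s \<alpha>. pmf (\<sigma> s) \<alpha>) bel | \<sigma>. \<forall>s. set_pmf (\<sigma> s) \<subseteq> AvAct P s}"
proof -
  have "\<And>\<sigma>. (\<Sum>s\<in>UNIV. bel $ s * (\<Sum>\<alpha>\<in>UNIV. pmf (\<sigma> s) \<alpha> *
                (\<Sum>t\<in>UNIV. Ptr P s \<alpha> t * pmf (obs t) z))) = tot (UU P obs z (\<lambda>s \<alpha>. pmf (\<sigma> s) \<alpha>) bel)"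
  proof -
    fix \<sigma> :: "'a \<Rightarrow> 'b pmf"
    have "(\<Sum>s\<in>UNIV. bel $ s * (\<Sum>\<alpha>\<in>UNIV. pmf (\<sigma> s) \<alpha> *
                (\<Sum>t\<in>UNIV. Ptr P s \<alpha> t * pmf (obs t) z))) =
       (\<Sum>s\<in>UNIV. \<Sum>\<alpha>\<in>UNIV. \<Sum>t\<in>UNIV. bel $ s * (pmf (\<sigma> s) \<alpha> * (Ptr P s \<alpha> t * pmf (obs t) z)))"
      by (simp add: sum_distrib_left)
    also have "\<dots> = (\<Sum>s\<in>UNIV. \<Sum>t\<in>UNIV. \<Sum>\<alpha>\<in>UNIV. bel $ s * (pmf (\<sigma> s) \<alpha> * (Ptr P s \<alpha> t * pmf (obs t) z)))"
      by (rule sum.cong[OF refl], rule sum.swap)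
    also have "\<dots> = (\<Sum>t\<in>UNIV. \<Sum>s\<in>UNIV. \<Sum>\<alpha>\<in>UNIV. bel $ s * (pmf (\<sigma> s) \<alpha> * (Ptr P s \<alpha> t * pmf (obs t) z)))"
      by (rule sum.swap)
    also have "\<dots> = tot (UU P obs z (\<lambda>s \<alpha>. pmf (\<sigma> s) \<alpha>) bel)"
      unfolding tot_def UU_def vv_def by (simp add: sum_distrib_left)
    finally show "(\<Sum>s\<in>UNIV. bel $ s * (\<Sum>\<alpha>\<in>UNIV. pmf (\<sigma> s) \<alpha> *
                (\<Sum>t\<in>UNIV. Ptr P s \<alpha> t * pmf (obs t) z))) = tot (UU P obs z (\<lambda>s \<alpha>. pmf (\<sigma> s) \<alpha>) bel)" .
  qed
  note den = this
  have key: "(\<chi> s'.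
          (\<Sum>s\<in>UNIV. bel $ s * (\<Sum>\<alpha>\<in>UNIV. pmf (\<sigma> s) \<alpha> * Ptr P s \<alpha> s' * pmf (obs s') z))
          / (\<Sum>s\<in>UNIV. bel $ s * (\<Sum>\<alpha>\<in>UNIV. pmf (\<sigma> s) \<alpha> *
                (\<Sum>t\<in>UNIV. Ptr P s \<alpha> t * pmf (obs t) z)))) = NN P obs z (\<lambda>s \<alpha>. pmf (\<sigma> s) \<alpha>) bel" for \<sigma>
    unfolding den NN_def
    by (simp add: vec_eq_iff UU_def vv_def divide_inverse mult_ac)
  show ?thesis
    unfolding est_up_def key by blast
qed


abbreviation dl :: "('s \<Rightarrow> 'a) \<Rightarrow> 's \<Rightarrow> 'a \<Rightarrow> real" where
  "dl d \<equiv> (\<lambda>s \<alpha>. pmf (return_pmf (d s)) \<alpha>)"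

lemma vv_nonneg: "0 \<le> vv P obs z s \<alpha> s'"
  unfolding vv_def Ptr_def by (auto split: option.splits)

lemma UU_nonneg:
  assumes "\<forall>s. 0 \<le> bel $ s" "\<forall>s \<alpha>. 0 \<le> \<omega> s \<alpha>"
  shows "0 \<le> UU P obs z \<omega> bel $ s'"
  unfolding UU_def using assms vv_nonneg
  by (auto intro!: sum_nonneg mult_nonneg_nonneg)

lemma NN_nonneg:
  assumes "\<forall>s. 0 \<le> bel $ s" "\<forall>s \<alpha>. 0 \<le> \<omega> s \<alpha>"
  shows "0 \<le> NN P obs z \<omega> bel $ s'"
proof -
  have "0 \<le> tot (UU P obs z \<omega> bel)" unfolding tot_def by (intro sum_nonneg UU_nonneg[OF assms])
  then show ?thesis unfolding NN_def using UU_nonneg[OF assms, of P obs z s'] by simp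
qed

lemma UU_eq_NN:
  assumes "\<forall>s. 0 \<le> bel $ s" "\<forall>s \<alpha>. 0 \<le> \<omega> s \<alpha>"
  shows "UU P obs z \<omega> bel = tot (UU P obs z \<omega> bel) *\<^sub>R NN P obs z \<omega> bel"
proof (cases "tot (UU P obs z \<omega> bel) = 0")
  case True
  then have "\<forall>s\<in>UNIV. UU P obs z \<omega> bel $ s = 0"
    unfolding tot_def using UU_nonneg[OF assms] by (subst sum_nonneg_eq_0_iff[symmetric]) auto
  then show ?thesis using True by (simp add: vec_eq_iff)
next
  case False
  then show ?thesis by (simp add: NN_def)
qed

lemma UU_lin: "UU P obs z \<omega> (\<Sum>f\<in>F. \<mu> f *\<^sub>R f) = (\<Sum>f\<in>F. \<mu> f *\<^sub>R UU P obs z \<omega> f)"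
proof -
  have "(\<Sum>s\<in>UNIV. (\<Sum>f\<in>F. \<mu> f * f $ s) * X s) = (\<Sum>f\<in>F. \<mu> f * (\<Sum>s\<in>UNIV. f $ s * X s))" for X
  proof -
    have "(\<Sum>s\<in>UNIV. (\<Sum>f\<in>F. \<mu> f * f $ s) * X s) = (\<Sum>s\<in>UNIV. \<Sum>f\<in>F. \<mu> f * (f $ s * X s))"
      by (simp add: sum_distrib_right mult.assoc)
    also have "\<dots> = (\<Sum>f\<in>F. \<Sum>s\<in>UNIV. \<mu> f * (f $ s * X s))" by (rule sum.swap)
    finally show ?thesis by (simp add: sum_distrib_left)
  qed
  then show ?thesis unfolding UU_def by (simp add: vec_eq_iff)
qed

lemma UU_decomp:
  fixes \<sigma> :: "'s::finite \<Rightarrow> 'a::finite pmf"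
  shows "UU P obs z (\<lambda>s \<alpha>. pmf (\<sigma> s) \<alpha>) bel =
    (\<Sum>d\<in>UNIV. (\<Prod>s\<in>UNIV. pmf (\<sigma> s) (d s)) *\<^sub>R UU P obs z (dl d) bel)"
proof -
  have one: "\<And>s. (\<Sum>\<alpha>\<in>UNIV. pmf (\<sigma> s) \<alpha>) = 1" by (rule sum_pmf_eq_1) auto
  have dl: "(\<Sum>\<alpha>\<in>UNIV. pmf (return_pmf (d s)) \<alpha> * vv P obs z s \<alpha> s') = vv P obs z s (d s) s'" for d s s'
  proof -
    have "(\<Sum>\<alpha>\<in>UNIV. pmf (return_pmf (d s)) \<alpha> * vv P obs z s \<alpha> s') = (\<Sum>\<alpha>\<in>{d s}. pmf (return_pmf (d s)) \<alpha> * vv P obs z s \<alpha> s')"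
      by (rule sum.mono_neutral_right) (auto simp: indicator_def)
    then show ?thesis by simp
  qed
  have ps: "(\<Sum>\<alpha>\<in>UNIV. pmf (\<sigma> s) \<alpha> * vv P obs z s \<alpha> s') =
      (\<Sum>d\<in>UNIV. (\<Prod>s\<in>UNIV. pmf (\<sigma> s) (d s)) * vv P obs z s (d s) s')" for s s'
    using prod_sum_single[OF one, where g="\<lambda>\<alpha>. vv P obs z s \<alpha> s'" and st=s] by simp
  have eq: "(\<Sum>s\<in>UNIV. bel $ s * (\<Sum>\<alpha>\<in>UNIV. pmf (\<sigma> s) \<alpha> * vv P obs z s \<alpha> s')) =
      (\<Sum>d\<in>UNIV. (\<Prod>s\<in>UNIV. pmf (\<sigma> s) (d s)) * (\<Sum>s\<in>UNIV. bel $ s * (\<Sum>\<alpha>\<in>UNIV. pmf (return_pmf (d s)) \<alpha> * vv P obs z s \<alpha> s')))" for s'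
  proof -
    have "(\<Sum>s\<in>UNIV. bel $ s * (\<Sum>\<alpha>\<in>UNIV. pmf (\<sigma> s) \<alpha> * vv P obs z s \<alpha> s')) =
      (\<Sum>s\<in>UNIV. bel $ s * (\<Sum>d\<in>UNIV. (\<Prod>s\<in>UNIV. pmf (\<sigma> s) (d s)) * vv P obs z s (d s) s'))"
      by (simp only: ps)
    also have "\<dots> = (\<Sum>s\<in>UNIV. \<Sum>d\<in>UNIV. (\<Prod>s\<in>UNIV. pmf (\<sigma> s) (d s)) * (bel $ s * vv P obs z s (d s) s'))"
      by (simp add: sum_distrib_left mult.left_commute)
    also have "\<dots> = (\<Sum>d\<in>UNIV. \<Sum>s\<in>UNIV. (\<Prod>s\<in>UNIV. pmf (\<sigma> s) (d s)) * (bel $ s * vv P obs z s (d s) s'))"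
      by (rule sum.swap)
    also have "\<dots> = (\<Sum>d\<in>UNIV. (\<Prod>s\<in>UNIV. pmf (\<sigma> s) (d s)) * (\<Sum>s\<in>UNIV. bel $ s * (\<Sum>\<alpha>\<in>UNIV. pmf (return_pmf (d s)) \<alpha> * vv P obs z s \<alpha> s')))"
      by (simp only: dl sum_distrib_left)
    finally show "(\<Sum>s\<in>UNIV. bel $ s * (\<Sum>\<alpha>\<in>UNIV. pmf (\<sigma> s) \<alpha> * vv P obs z s \<alpha> s')) =
      (\<Sum>d\<in>UNIV. (\<Prod>s\<in>UNIV. pmf (\<sigma> s) (d s)) * (\<Sum>s\<in>UNIV. bel $ s * (\<Sum>\<alpha>\<in>UNIV. pmf (return_pmf (d s)) \<alpha> * vv P obs z s \<alpha> s')))" .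
  qed
  show ?thesis unfolding vec_eq_iff UU_def using eq by simp
qed


lemma tot_nonneg: "\<forall>s. 0 \<le> x $ s \<Longrightarrow> 0 \<le> tot x"
  unfolding tot_def by (auto intro: sum_nonneg)

lemma main_step:
  fixes F :: "(real^'s::finite) set" and \<sigma> :: "'s \<Rightarrow> 'a::finite pmf"
  assumes fin: "finite F" and nn: "\<forall>f\<in>F. \<forall>s. 0 \<le> f$s" and bel: "bel \<in> convex hull F"
    and \<sigma>: "\<forall>s. set_pmf (\<sigma> s) \<subseteq> AvAct P s"
  shows "NN P obs z (\<lambda>s \<alpha>. pmf (\<sigma> s) \<alpha>) bel \<in>
     convex hull ((\<lambda>(f,d). NN P obs z (dl d) f) ` (F \<times> {d. \<forall>s. d s \<in> AvAct P s}))"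
proof -
  obtain \<mu> where \<mu>: "\<forall>x\<in>F. 0 \<le> \<mu> x" "sum \<mu> F = 1" "(\<Sum>x\<in>F. \<mu> x *\<^sub>R x) = bel"
    using convex_hull_finite[OF fin] bel by auto
  define D where "D = {d::'s\<Rightarrow>'a. \<forall>s. d s \<in> AvAct P s}"
  define W where "W d = (\<Prod>s\<in>UNIV. pmf (\<sigma> s) (d s))" for d :: "'s \<Rightarrow> 'a"
  define Ud where "Ud f d = UU P obs z (dl d) f" for f d
  define c where "c = (\<lambda>(f,d). \<mu> f * W d * tot (Ud f d))"
  define y where "y = (\<lambda>(f,d). NN P obs z (dl d) f)"
  define Y where "Y = convex hull (y ` (F \<times> D))"
  have finD: "finite D" by simp
  have Wz: "W d = 0" if dn: "d \<notin> D" for d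
  proof -
    obtain s where "d s \<notin> AvAct P s" using dn D_def by auto
    then have "pmf (\<sigma> s) (d s) = 0" using \<sigma> by (metis set_pmf_iff subsetD)
    then show ?thesis unfolding W_def by (auto simp: prod_zero_iff)
  qed
  have Wnn: "0 \<le> W d" for d unfolding W_def by (auto intro: prod_nonneg)
  have dlnn: "\<forall>s \<alpha>. 0 \<le> dl d s \<alpha>" for d :: "'s \<Rightarrow> 'a" by auto
  have Udnn: "0 \<le> tot (Ud f d)" if "f \<in> F" for f d
    unfolding Ud_def using nn that by (intro tot_nonneg allI UU_nonneg) auto
  have U1: "UU P obs z (\<lambda>s \<alpha>. pmf (\<sigma> s) \<alpha>) bel = (\<Sum>f\<in>F. \<mu> f *\<^sub>R (\<Sum>d\<in>D. W d *\<^sub>R Ud f d))"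
  proof -
    have "UU P obs z (\<lambda>s \<alpha>. pmf (\<sigma> s) \<alpha>) bel = (\<Sum>f\<in>F. \<mu> f *\<^sub>R UU P obs z (\<lambda>s \<alpha>. pmf (\<sigma> s) \<alpha>) f)"
      unfolding \<mu>(3)[symmetric] by (rule UU_lin)
    also have "\<dots> = (\<Sum>f\<in>F. \<mu> f *\<^sub>R (\<Sum>d\<in>UNIV. W d *\<^sub>R Ud f d))"
    proof -
      have "UU P obs z (\<lambda>s \<alpha>. pmf (\<sigma> s) \<alpha>) f = (\<Sum>d\<in>UNIV. W d *\<^sub>R Ud f d)" for f
        unfolding W_def Ud_def by (rule UU_decomp)
      then show ?thesis by simp
    qed
    also have "\<dots> = (\<Sum>f\<in>F. \<mu> f *\<^sub>R (\<Sum>d\<in>D. W d *\<^sub>R Ud f d))"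
    proof -
      have "(\<Sum>d\<in>UNIV. W d *\<^sub>R Ud f d) = (\<Sum>d\<in>D. W d *\<^sub>R Ud f d)" for f
        by (rule sum.mono_neutral_right) (auto simp: Wz)
      then show ?thesis by simp
    qed
    finally show ?thesis .
  qed
  have U2: "UU P obs z (\<lambda>s \<alpha>. pmf (\<sigma> s) \<alpha>) bel = (\<Sum>p\<in>F \<times> D. c p *\<^sub>R y p)"
  proof -
    have "(\<Sum>f\<in>F. \<mu> f *\<^sub>R (\<Sum>d\<in>D. W d *\<^sub>R Ud f d)) = (\<Sum>f\<in>F. \<Sum>d\<in>D. c (f,d) *\<^sub>R y (f,d))"
    proof (rule sum.cong[OF refl])
      fix f assume f: "f \<in> F"
      have "Ud f d = tot (Ud f d) *\<^sub>R y (f,d)" for d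
        unfolding Ud_def y_def prod.case using nn f by (intro UU_eq_NN) auto
      then have "(\<Sum>d\<in>D. W d *\<^sub>R Ud f d) = (\<Sum>d\<in>D. W d *\<^sub>R (tot (Ud f d) *\<^sub>R y (f,d)))"
        by (intro sum.cong refl arg_cong[where f="\<lambda>u. W _ *\<^sub>R u"])
      then show "\<mu> f *\<^sub>R (\<Sum>d\<in>D. W d *\<^sub>R Ud f d) = (\<Sum>d\<in>D. c (f,d) *\<^sub>R y (f,d))"
        by (simp add: c_def scaleR_sum_right mult.assoc)
    qed
    also have "\<dots> = (\<Sum>p\<in>F \<times> D. c p *\<^sub>R y p)"
      by (simp add: sum.cartesian_product)
    finally show ?thesis using U1 by simp
  qed
  have T: "tot (UU P obs z (\<lambda>s \<alpha>. pmf (\<sigma> s) \<alpha>) bel) = (\<Sum>p\<in>F \<times> D. c p)"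
  proof -
    have "tot (UU P obs z (\<lambda>s \<alpha>. pmf (\<sigma> s) \<alpha>) bel) = (\<Sum>f\<in>F. \<Sum>d\<in>D. c (f,d))"
      unfolding U1 by (simp add: tot_sum tot_scale c_def sum_distrib_left mult.assoc)
    then show ?thesis by (simp add: sum.cartesian_product)
  qed
  have cnn: "0 \<le> c p" if "p \<in> F \<times> D" for p
    using that \<mu>(1) Wnn Udnn unfolding c_def by (auto intro!: mult_nonneg_nonneg)
  have yY: "y p \<in> Y" if "p \<in> F \<times> D" for p
    unfolding Y_def using that by (intro hull_inc) auto
  have "NN P obs z (\<lambda>s \<alpha>. pmf (\<sigma> s) \<alpha>) bel \<in> Y"
  proof (cases "(\<Sum>p\<in>F \<times> D. c p) = 0")
    case False
    define C where "C = (\<Sum>p\<in>F \<times> D. c p)"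
    have "NN P obs z (\<lambda>s \<alpha>. pmf (\<sigma> s) \<alpha>) bel = (\<Sum>p\<in>F \<times> D. (c p / C) *\<^sub>R y p)"
      unfolding NN_def T unfolding U2 C_def by (simp add: scaleR_sum_right divide_inverse mult.commute)
    also have "\<dots> \<in> Y"
      unfolding Y_def
    proof (rule convex_sum)
      show "finite (F \<times> D)" using fin finD by simp
      show "convex (convex hull (y ` (F \<times> D)))" by (rule convex_convex_hull)
      show "(\<Sum>i\<in>F \<times> D. c i / C) = 1" using False C_def by (simp add: sum_divide_distrib[symmetric])
      show "\<And>i. i \<in> F \<times> D \<Longrightarrow> 0 \<le> c i / C" using cnn C_def by (simp add: sum_nonneg)
      show "\<And>i. i \<in> F \<times> D \<Longrightarrow> y i \<in> convex hull (y ` (F \<times> D))" using yY Y_def by simp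
    qed
    finally show ?thesis .
  next
    case True
    have NN0: "NN P obs z (\<lambda>s \<alpha>. pmf (\<sigma> s) \<alpha>) bel = 0"
      unfolding NN_def T True by simp
    obtain f where f: "f \<in> F" "0 < \<mu> f"
    proof (rule ccontr)
      assume "\<not> thesis"
      with that have "\<forall>f\<in>F. \<mu> f = 0" using \<mu>(1) by force
      then show False using \<mu>(2) by simp
    qed
    define d where "d s = (SOME \<alpha>. \<alpha> \<in> set_pmf (\<sigma> s))" for s
    have ds: "d s \<in> set_pmf (\<sigma> s)" for s
      unfolding d_def by (rule someI_ex) (use set_pmf_not_empty[of "\<sigma> s"] in blast)
    have dD: "d \<in> D" unfolding D_def using ds \<sigma> by blast
    have Wp: "0 < W d" unfolding W_def using ds by (auto intro!: prod_pos pmf_positive)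
    have "c (f,d) = 0"
      using True sum_nonneg_eq_0_iff[of "F \<times> D" c] cnn fin finD f dD by auto
    then have "tot (Ud f d) = 0" using f Wp unfolding c_def by simp
    then have "y (f,d) = 0" unfolding y_def NN_def Ud_def by simp
    then show ?thesis using NN0 yY[of "(f,d)"] f dD by simp
  qed
  then show ?thesis unfolding Y_def y_def D_def .
qed


definition Inv :: "(real^'s::finite) set \<Rightarrow> bool" where
  "Inv B \<longleftrightarrow> (\<exists>F. finite F \<and> F \<subseteq> B \<and> B \<subseteq> convex hull F \<and> (\<forall>f\<in>F. \<forall>s. 0 \<le> f$s))"

lemma inv_step:
  fixes P :: "'s::finite \<Rightarrow> 'a::finite \<Rightarrow> 's pmf option"
  assumes "Inv B"
  shows "Inv (\<Union>bel\<in>B. est_up P obs bel z)"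
proof -
  obtain F where F: "finite F" "F \<subseteq> B" "B \<subseteq> convex hull F" "\<forall>f\<in>F. \<forall>s. 0 \<le> f$s"
    using assms unfolding Inv_def by blast
  define D where "D = {d::'s\<Rightarrow>'a. \<forall>s. d s \<in> AvAct P s}"
  define F' where "F' = (\<lambda>(f,d). NN P obs z (dl d) f) ` (F \<times> D)"
  have "finite F'" unfolding F'_def using F(1) by simp
  moreover have "F' \<subseteq> (\<Union>bel\<in>B. est_up P obs bel z)"
  proof
    fix x assume "x \<in> F'"
    then obtain f d where fd: "f \<in> F" "d \<in> D" "x = NN P obs z (dl d) f" unfolding F'_def by (auto simp del: pmf_return)
    have "x \<in> est_up P obs f z"
      unfolding est_up_eq using fd D_def
      by (intro CollectI exI[of _ "\<lambda>s. return_pmf (d s)"]) (auto simp del: pmf_return)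
    then show "x \<in> (\<Union>bel\<in>B. est_up P obs bel z)" using fd F(2) by auto
  qed
  moreover have "(\<Union>bel\<in>B. est_up P obs bel z) \<subseteq> convex hull F'"
  proof
    fix x assume "x \<in> (\<Union>bel\<in>B. est_up P obs bel z)"
    then obtain bel \<sigma> where b: "bel \<in> B" "\<forall>s. set_pmf (\<sigma> s) \<subseteq> AvAct P s"
      "x = NN P obs z (\<lambda>s \<alpha>. pmf (\<sigma> s) \<alpha>) bel"
      unfolding est_up_eq by auto
    show "x \<in> convex hull F'"
      unfolding F'_def D_def b(3) by (rule main_step[OF F(1) F(4) _ b(2)]) (use F(3) b(1) in blast)
  qed
  moreover have "\<forall>f\<in>F'. \<forall>s. 0 \<le> f$s"
    unfolding F'_def using F(4) by (auto intro!: NN_nonneg)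
  ultimately show ?thesis unfolding Inv_def by blast
qed

lemma inv_foldl: "Inv B \<Longrightarrow> Inv (foldl (\<lambda>B z. \<Union>bel\<in>B. est_up P obs bel z) B zs)"
  by (induction zs arbitrary: B) (auto intro: inv_step)

lemma inv_V: "Inv B \<Longrightarrow> finite (V B)"
proof -
  assume "Inv B"
  then obtain F where F: "finite F" "F \<subseteq> B" "B \<subseteq> convex hull F" unfolding Inv_def by blast
  have "V B \<subseteq> F"
  proof
    fix b assume b: "b \<in> V B"
    show "b \<in> F"
    proof (rule ccontr)
      assume "b \<notin> F"
      then have "F \<subseteq> B - {b}" using F by auto
      then have "convex hull F \<subseteq> convex hull (B - {b})" by (rule hull_mono)
      then show False using b F(3) unfolding V_def by auto
    qed
  qed
  then show ?thesis using F(1) finite_subset by blast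
qed

lemma inv_init: "Inv {est_init \<iota> obs z}"
proof -
  have "\<forall>s. 0 \<le> est_init \<iota> obs z $ s"
  proof
    fix s
    have "0 \<le> (\<Sum>s\<in>UNIV. pmf \<iota> s * pmf (obs s) z)" by (auto intro: sum_nonneg)
    then show "0 \<le> est_init \<iota> obs z $ s" unfolding est_init_def Let_def by auto
  qed
  then show ?thesis unfolding Inv_def by (intro exI[of _ "{est_init \<iota> obs z}"]) (auto intro: hull_inc)
qed

theorem lemma5:
  fixes \<iota> :: "'s::finite pmf"
    and P :: "'s \<Rightarrow> 'a::finite \<Rightarrow> 's pmf option"
    and obs :: "'s \<Rightarrow> 'z::finite pmf"
    and \<tau> :: "'z list"
  assumes "\<forall>s. AvAct P s \<noteq> {}"
    and "\<tau> \<noteq> []"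
  shows "finite (V (est_MDP \<iota> P obs \<tau>))"
proof -
  obtain z zs where "\<tau> = z # zs" using assms(2) by (cases \<tau>) auto
  then show ?thesis using inv_V[OF inv_foldl[OF inv_init]] by simp
qed

end
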